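(* For every fixed $x\in\mathbb{R}$ and $A>1$ there exists $N_3>0$ depending only on $x$ and $A$ such that for all $n>N_3$ and all $w\in[1,A]$: $s_0/n<G_n(x)/2<AG_n(x)/2<\pi/2$ and $$D_n\big(wG_n(x)/2\big)\le e^{1-(w-1)\ln n}\,D_n\big(G_n(x)/2\big),$$ where $G_n(x)=\dfrac{8x-5\ln(2\ln n)}{2n(2\ln n)^{1/2}}+\dfrac{(32\ln n)^{1/2}}{n}$.
   Context: For $\alpha\in(0,\pi)$ let $D_n(\alpha)=\det_{1\le j,l\le n}\left(\frac{1}{2\pi}\int_\alpha^{2\pi-\alpha}e^{i(j-l)\theta}\,d\theta\right)$. By a result of Deift–Its–Krasovsky–Zhou there are constants $c_0\in\mathbb{R}$ and $s_0>0$ such that for every $\varepsilon>0$, uniformly in $s_0/n<\alpha<\pi-\varepsilon$, $$\ln D_n(\alpha)=n^2\ln\cos\frac{\alpha}{2}-\frac14\ln\Big(n\sin\frac{\alpha}{2}\Big)+c_0+O\Big(\frac{1}{n\sin(\alpha/2)}\Big);$$ $s_0$ denotes such a fixed constant. *)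

theory Defs
  imports "HOL-Analysis.Analysis" "Jordan_Normal_Form.Determinant"
begin

text \<open>Toeplitz determinant D_n(alpha) with symbol the indicator of the arc [alpha, 2pi - alpha].
  Matrix indices run over 0..n-1 (only j - l matters). The determinant is real (the matrix is
  real symmetric), so we take its real part.\<close>

definition toeplitz_entry :: "real \<Rightarrow> nat \<Rightarrow> nat \<Rightarrow> complex" where
  "toeplitz_entry \<alpha> j l =
     complex_of_real (1 / (2 * pi)) *
     integral {\<alpha>..2 * pi - \<alpha>} (\<lambda>\<theta>. exp (\<i> * complex_of_real ((real j - real l) * \<theta>)))"

definition D :: "nat \<Rightarrow> real \<Rightarrow> real" where
  "D n \<alpha> = Re (Determinant.det (Matrix.mat n n (\<lambda>(j, l). toeplitz_entry \<alpha> j l)))"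

definition G :: "nat \<Rightarrow> real \<Rightarrow> real" where
  "G n x = (8 * x - 5 * ln (2 * ln (real n))) / (2 * real n * sqrt (2 * ln (real n)))
           + sqrt (32 * ln (real n)) / real n"

end

theory Submission
  imports Defs "HOL-Real_Asymp.Real_Asymp"
begin


definition tr :: "real \<Rightarrow> real \<Rightarrow> real" where
  "tr \<alpha> k = 1 / (2 * pi) * integral {\<alpha>..2 * pi - \<alpha>} (\<lambda>\<theta>. cos (k * \<theta>))"

lemma int_sin_zero:
  assumes "\<alpha> \<le> pi" "k = real_of_int m"
  shows "integral {\<alpha>..2 * pi - \<alpha>} (\<lambda>\<theta>. sin (k * \<theta>)) = 0"
proof (cases "k = 0")
  case True then show ?thesis by simp
next
  case False
  have "((\<lambda>\<theta>. sin (k * \<theta>)) has_integral ((- cos (k * (2 * pi - \<alpha>)) / k) - (- cos (k * \<alpha>) / k))) {\<alpha>..2 * pi - \<alpha>}"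
  proof (rule fundamental_theorem_of_calculus)
    show "\<alpha> \<le> 2 * pi - \<alpha>" using assms by simp
    fix x assume "x \<in> {\<alpha>..2 * pi - \<alpha>}"
    have "((\<lambda>\<theta>. - cos (k * \<theta>) / k) has_real_derivative sin (k * x)) (at x within {\<alpha>..2 * pi - \<alpha>})"
      using False by (auto intro!: derivative_eq_intros)
    then show "((\<lambda>\<theta>. - cos (k * \<theta>) / k) has_vector_derivative sin (k * x)) (at x within {\<alpha>..2 * pi - \<alpha>})"
      by (simp add: has_real_derivative_iff_has_vector_derivative)
  qed
  moreover have "cos (k * (2 * pi - \<alpha>)) = cos (k * \<alpha>)"
  proof -
    have "k * (2 * pi - \<alpha>) = 2 * pi * of_int m - k * \<alpha>" using assms by (simp add: algebra_simps)
    then show ?thesis by (simp add: cos_diff)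
  qed
  ultimately show ?thesis by (simp add: integral_unique)
qed

lemma integral_of_real_cont:
  assumes "continuous_on {a..b} f"
  shows "integral {a..b} (\<lambda>x. complex_of_real (f x)) = of_real (integral {a..b} (f :: real \<Rightarrow> real))"
proof -
  have "(f has_integral integral {a..b} f) {a..b}"
    using integrable_continuous_interval[OF assms] by (rule integrable_integral)
  then have "((of_real \<circ> f) has_integral (of_real (integral {a..b} f) :: complex)) {a..b}"
    by (rule has_integral_linear[OF _ bounded_linear_of_real])
  then show ?thesis by (simp add: o_def integral_unique)
qed

lemma exp_i_real: "exp (\<i> * complex_of_real t) = of_real (cos t) + \<i> * of_real (sin t)"
  by (simp add: cis_conv_exp[symmetric] complex_eq_iff)

lemma entry_eq:
  assumes "\<alpha> \<le> pi"
  shows "toeplitz_entry \<alpha> j l = complex_of_real (tr \<alpha> (real j - real l))"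
proof -
  let ?k = "real j - real l"
  let ?S = "{\<alpha>..2 * pi - \<alpha>}"
  have c1: "continuous_on ?S (\<lambda>\<theta>. cos (?k * \<theta>))" by (intro continuous_intros)
  have c2: "continuous_on ?S (\<lambda>\<theta>. sin (?k * \<theta>))" by (intro continuous_intros)
  have "integral ?S (\<lambda>\<theta>. exp (\<i> * complex_of_real (?k * \<theta>)))
      = integral ?S (\<lambda>\<theta>. of_real (cos (?k * \<theta>)) + \<i> * of_real (sin (?k * \<theta>)))"
    by (simp only: exp_i_real)
  also have "\<dots> = integral ?S (\<lambda>\<theta>. complex_of_real (cos (?k * \<theta>))) + integral ?S (\<lambda>\<theta>. \<i> * complex_of_real (sin (?k * \<theta>)))"
    by (rule integral_add; rule integrable_continuous_interval; intro continuous_intros)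
  also have "\<dots> = of_real (integral ?S (\<lambda>\<theta>. cos (?k * \<theta>))) + \<i> * of_real (integral ?S (\<lambda>\<theta>. sin (?k * \<theta>)))"
    by (simp only: integral_mult_right integral_of_real_cont[OF c1] integral_of_real_cont[OF c2])
  also have "integral ?S (\<lambda>\<theta>. sin (?k * \<theta>)) = 0"
    by (rule int_sin_zero[OF assms, of _ "int j - int l"]) simp
  finally show ?thesis unfolding toeplitz_entry_def tr_def by simp
qed

definition RM :: "nat \<Rightarrow> real \<Rightarrow> real mat" where
  "RM n \<alpha> = Matrix.mat n n (\<lambda>(j, l). tr \<alpha> (real j - real l))"

lemma D_eq_det_RM:
  assumes "\<alpha> \<le> pi"
  shows "D n \<alpha> = Determinant.det (RM n \<alpha>)"
proof -
  have "Matrix.mat n n (\<lambda>(j, l). toeplitz_entry \<alpha> j l) = of_real_hom.mat_hom (RM n \<alpha>)"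
    by (rule eq_matI) (auto simp: RM_def entry_eq[OF assms])
  then show ?thesis unfolding D_def by (simp add: of_real_hom.hom_det)
qed

lemma quad_nonneg:
  "0 \<le> (\<Sum>j<n. \<Sum>l<n. v j * v l * tr \<alpha> (real j - real l))"
proof -
  let ?S = "{\<alpha>..2 * pi - \<alpha>}"
  have int: "(\<lambda>\<theta>. c * cos (k * \<theta>)) integrable_on ?S" for c k :: real
    by (rule integrable_continuous_interval) (intro continuous_intros)
  have int2: "(\<lambda>\<theta>. \<Sum>l<n. c l * cos (k l * \<theta>)) integrable_on ?S" for c k :: "nat \<Rightarrow> real"
    by (rule integrable_continuous_interval) (intro continuous_intros)
  have "(\<Sum>j<n. \<Sum>l<n. v j * v l * tr \<alpha> (real j - real l))
      = (\<Sum>j<n. \<Sum>l<n. 1 / (2 * pi) * integral ?S (\<lambda>\<theta>. v j * v l * cos ((real j - real l) * \<theta>)))"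
    by (simp add: tr_def integral_mult_right)
  also have "\<dots> = 1 / (2 * pi) * (\<Sum>j<n. integral ?S (\<lambda>\<theta>. \<Sum>l<n. v j * v l * cos ((real j - real l) * \<theta>)))"
    by (simp add: sum_distrib_left integral_sum int)
  also have "\<dots> = 1 / (2 * pi) * integral ?S (\<lambda>\<theta>. \<Sum>j<n. \<Sum>l<n. v j * v l * cos ((real j - real l) * \<theta>))"
    by (subst integral_sum) (auto intro: int2)
  also have "\<dots> = 1 / (2 * pi) * integral ?S (\<lambda>\<theta>. (\<Sum>j<n. v j * cos (real j * \<theta>))\<^sup>2 + (\<Sum>j<n. v j * sin (real j * \<theta>))\<^sup>2)"
  proof -
    have "(\<Sum>j<n. \<Sum>l<n. v j * v l * cos ((real j - real l) * \<theta>)) = (\<Sum>j<n. v j * cos (real j * \<theta>))\<^sup>2 + (\<Sum>j<n. v j * sin (real j * \<theta>))\<^sup>2" for \<theta>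
      by (simp add: power2_eq_square sum_product left_diff_distrib cos_diff sum.distrib[symmetric] algebra_simps)
    then show ?thesis by simp
  qed
  also have "\<dots> \<ge> 0"
    by (intro mult_nonneg_nonneg integral_nonneg integrable_continuous_interval) (auto intro!: continuous_intros)
  finally show ?thesis .
qed

definition Mt :: "nat \<Rightarrow> real \<Rightarrow> real \<Rightarrow> nat \<Rightarrow> nat \<Rightarrow> real" where
  "Mt n \<alpha> t j l = (1 - t) * (if j = l then 1 else 0) + t * tr \<alpha> (real j - real l)"

lemma det_Mt_nonzero:
  assumes "0 \<le> t" "t < 1"
  shows "Determinant.det (Matrix.mat n n (\<lambda>(j, l). Mt n \<alpha> t j l)) \<noteq> 0"
proof
  let ?M = "Matrix.mat n n (\<lambda>(j, l). Mt n \<alpha> t j l)"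
  assume "Determinant.det ?M = 0"
  then obtain v where v: "v \<in> carrier_vec n" "v \<noteq> 0\<^sub>v n" "?M *\<^sub>v v = 0\<^sub>v n"
    using det_0_iff_vec_prod_zero_field[of ?M n] by auto
  have dv: "dim_vec v = n" using v(1) by auto
  obtain i where i: "i < n" "v $ i \<noteq> 0"
    using v(1,2) by (metis carrier_vecD eq_vecI index_zero_vec(1,2))
  have "v \<bullet> (?M *\<^sub>v v) = 0" using v(3) dv by (auto simp: scalar_prod_def intro!: sum.neutral)
  moreover have "v \<bullet> (?M *\<^sub>v v) = (\<Sum>j<n. \<Sum>l<n. v $ j * v $ l * Mt n \<alpha> t j l)"
    using dv by (simp add: scalar_prod_def Matrix.row_def sum_distrib_left atLeast0LessThan algebra_simps)
  moreover have "(\<Sum>j<n. \<Sum>l<n. v $ j * v $ l * Mt n \<alpha> t j l)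
      = (1 - t) * (\<Sum>j<n. (v $ j)\<^sup>2) + t * (\<Sum>j<n. \<Sum>l<n. v $ j * v $ l * tr \<alpha> (real j - real l))"
  proof -
    have e: "(\<Sum>l<n. v $ j * v $ l * Mt n \<alpha> t j l) = (1 - t) * (v $ j)\<^sup>2 + t * (\<Sum>l<n. v $ j * v $ l * tr \<alpha> (real j - real l))"
      if "j < n" for j
    proof -
      have "(\<Sum>l<n. v $ j * v $ l * Mt n \<alpha> t j l) = (\<Sum>l<n. (1 - t) * (if j = l then v $ j * v $ l else 0) + t * (v $ j * v $ l * tr \<alpha> (real j - real l)))"
        by (rule sum.cong) (auto simp: Mt_def algebra_simps)
      also have "\<dots> = (1 - t) * (\<Sum>l<n. (if j = l then v $ j * v $ l else 0)) + t * (\<Sum>l<n. v $ j * v $ l * tr \<alpha> (real j - real l))"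
        by (simp only: sum.distrib sum_distrib_left)
      also have "(\<Sum>l<n. (if j = l then v $ j * v $ l else 0)) = (v $ j)\<^sup>2"
        using that by (simp add: power2_eq_square)
      finally show ?thesis .
    qed
    have "(\<Sum>j<n. \<Sum>l<n. v $ j * v $ l * Mt n \<alpha> t j l) = (\<Sum>j<n. (1 - t) * (v $ j)\<^sup>2 + t * (\<Sum>l<n. v $ j * v $ l * tr \<alpha> (real j - real l)))"
      by (rule sum.cong) (auto simp: e)
    also have "\<dots> = (1 - t) * (\<Sum>j<n. (v $ j)\<^sup>2) + t * (\<Sum>j<n. \<Sum>l<n. v $ j * v $ l * tr \<alpha> (real j - real l))"
      by (simp only: sum.distrib sum_distrib_left)
    finally show ?thesis .
  qed
  moreover have "(\<Sum>j<n. (v $ j)\<^sup>2) > 0"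
  proof -
    have "(\<Sum>j<n. (v $ j)\<^sup>2) \<ge> (v $ i)\<^sup>2"
      using i by (intro member_le_sum) auto
    then show ?thesis using i by (smt (verit) zero_less_power2)
  qed
  moreover have "0 \<le> (\<Sum>j<n. \<Sum>l<n. v $ j * v $ l * tr \<alpha> (real j - real l))"
    by (rule quad_nonneg)
  ultimately show False using assms
    by (smt (verit) mult_pos_pos mult_nonneg_nonneg)
qed

lemma det_Mt_expand:
  "Determinant.det (Matrix.mat n n (\<lambda>(j, l). Mt n \<alpha> t j l)) =
   (\<Sum>p | p permutes {0..<n}. of_int (sign p) * (\<Prod>i = 0..<n. Mt n \<alpha> t i (p i)))"
  by (subst det_def'[of _ n]) (auto intro!: sum.cong prod.cong simp: permutes_in_image)

lemma D_nonneg: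
  assumes "\<alpha> \<le> pi"
  shows "0 \<le> D n \<alpha>"
proof (rule ccontr)
  assume neg: "\<not> 0 \<le> D n \<alpha>"
  define p where "p t = (\<Sum>p | p permutes {0..<n}. of_int (sign p) * (\<Prod>i = 0..<n. Mt n \<alpha> t i (p i)))" for t
  have pdet: "p t = Determinant.det (Matrix.mat n n (\<lambda>(j, l). Mt n \<alpha> t j l))" for t
    unfolding p_def by (rule det_Mt_expand[symmetric])
  have "Matrix.mat n n (\<lambda>(j, l). Mt n \<alpha> 1 j l) = RM n \<alpha>"
    by (rule eq_matI) (auto simp: RM_def Mt_def)
  then have p1: "p 1 = D n \<alpha>" using pdet D_eq_det_RM[OF assms] by simp
  have "Matrix.mat n n (\<lambda>(j, l). Mt n \<alpha> 0 j l) = 1\<^sub>m n"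
    by (rule eq_matI) (auto simp: Mt_def)
  then have p0: "p 0 = 1" using pdet by simp
  have cont: "continuous_on {0..1} p"
    unfolding p_def Mt_def by (intro continuous_intros)
  obtain x where x: "0 \<le> x" "x \<le> 1" "p x = 0"
    using IVT2'[of p 1 0 0] cont p0 p1 neg by auto
  have "x \<noteq> 1" using x p1 neg by auto
  then have "p x \<noteq> 0" using det_Mt_nonzero[of x n \<alpha>] x pdet by simp
  then show False using x by simp
qed



lemma sin_lower: fixes t y :: real assumes "0 \<le> y" shows "y - y^3/6 \<le> sin y"
proof -
  have se: "(\<Sum>m<3. sin_coeff m * y ^ m) = y"
    by (simp add: sin_coeff_def numeral_3_eq_3)
  have a: "\<bar>sin y - y\<bar> \<le> inverse (fact 3) * \<bar>y\<bar> ^ 3"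
    using Maclaurin_sin_bound[of y 3] unfolding se .
  have f3: "(fact 3 :: real) = 6" by (simp add: numeral_3_eq_3)
  have i: "inverse (fact 3) * \<bar>y\<bar> ^ 3 = y^3/6"
  proof -
    have "\<bar>y\<bar> ^ 3 = y ^ 3" using assms by simp
    moreover have "inverse (6::real) * y ^ 3 = y ^ 3 / 6" by (subst divide_inverse) (rule mult.commute)
    ultimately show ?thesis unfolding f3 by simp
  qed
  have "\<bar>sin y - y\<bar> \<le> y^3/6" using a i by linarith
  then show ?thesis unfolding abs_le_iff by linarith
qed

lemma sin_half: fixes t y :: real assumes "0 \<le> t" "t \<le> 1" shows "t / 2 \<le> sin t"
proof -
  have "t^2 \<le> 1" using assms by (simp add: power_le_one)
  then have "t * t^2 \<le> t * 1" using assms by (intro mult_left_mono) auto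
  then have "t^3 \<le> t" by (simp add: power2_eq_square power3_eq_cube)
  then show ?thesis using sin_lower[OF assms(1)] assms by linarith
qed

lemma cos_lower: fixes t y :: real assumes "0 \<le> t" shows "1 - t^2/2 \<le> cos t"
proof -
  have c: "cos t = 1 - 2 * sin (t/2) ^ 2"
  proof -
    have "cos t = cos (2 * (t/2))" by simp
    also have "\<dots> = 1 - 2 * sin (t/2) ^ 2" by (rule cos_double_sin)
    finally show ?thesis .
  qed
  have "(sin (t/2))^2 \<le> (t/2)^2"
    using abs_sin_x_le_abs_x[of "t/2"] by (simp only: abs_le_square_iff)
  moreover have "(t/2)^2 = t^2/4" by (simp add: power_divide)
  ultimately show ?thesis using c by linarith
qed

lemma cos_upper: fixes t y :: real assumes "0 \<le> t" "t \<le> 1" shows "cos t \<le> 1 - t^2/2 + t^4/24"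
proof -
  have c: "cos t = 1 - 2 * sin (t/2) ^ 2"
  proof -
    have "cos t = cos (2 * (t/2))" by simp
    also have "\<dots> = 1 - 2 * sin (t/2) ^ 2" by (rule cos_double_sin)
    finally show ?thesis .
  qed
  let ?s = "t/2"
  have l: "?s - ?s^3/6 \<le> sin ?s" using assms by (intro sin_lower) simp
  have nn: "0 \<le> ?s - ?s^3/6"
  proof -
    have "?s^2 \<le> 1" using assms by (simp add: power_le_one)
    then have "?s * ?s^2 \<le> ?s * 1" using assms by (intro mult_left_mono) auto
    then have "?s^3 \<le> ?s" by (simp add: power2_eq_square power3_eq_cube)
    then show ?thesis using assms by simp
  qed
  have "(?s - ?s^3/6)^2 \<le> (sin ?s)^2" using l nn by (intro power_mono) auto
  moreover have "(?s - ?s^3/6)^2 \<ge> ?s^2 - ?s^4/3"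
  proof -
    have e: "(u - u^3/6)^2 = u^2 - u^4/3 + (u^3/6)^2" for u :: real
    proof -
      have "(u - u^3/6)^2 = u^2 + (u^3/6)^2 - 2 * u * (u^3/6)" by (rule power2_diff)
      moreover have "2 * u * (u^3/6) = u^4/3" by (simp add: power4_eq_xxxx power3_eq_cube)
      ultimately show ?thesis by linarith
    qed
    have "0 \<le> (?s^3/6)^2" by simp
    then show ?thesis using e[of ?s] by linarith
  qed
  moreover have "(t/2)^2 = t^2/4" "(t/2)^4 = t^4/16" by (simp_all add: power_divide)
  ultimately show ?thesis using c by linarith
qed

lemma cos_pos_small: fixes t y :: real assumes "0 \<le> t" "t \<le> 1" shows "0 < cos t"
proof -
  have "t^2 \<le> 1" using assms by (simp add: power_le_one)
  then show ?thesis using cos_lower[OF assms(1)] by linarith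
qed

lemma lncos_upper: fixes t y :: real assumes "0 \<le> t" "t \<le> 1" shows "ln (cos t) \<le> t^4/24 - t^2/2"
proof -
  have "ln (cos t) \<le> cos t - 1" by (rule ln_le_minus_one[OF cos_pos_small[OF assms]])
  moreover have "cos t \<le> 1 - t^2/2 + t^4/24" by (rule cos_upper[OF assms])
  ultimately show ?thesis by linarith
qed

lemma lncos_lower: fixes t y :: real assumes "0 \<le> t" "t \<le> 1" shows "(- (t^2/2)) - t^4/2 \<le> ln (cos t)"
proof -
  have t2: "t^2 \<le> 1" using assms by (simp add: power_le_one)
  have a: "- (t^2/2) - 2 * (t^2/2)^2 \<le> ln (1 - t^2/2)"
    by (rule ln_one_minus_pos_lower_bound) (use t2 in auto)
  have p: "0 < 1 - t^2/2" using t2 by linarith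
  have b: "ln (1 - t^2/2) \<le> ln (cos t)"
    by (rule ln_mono[OF cos_lower[OF assms(1)] p])
  have c: "2 * (t^2/2)^2 = t^4/2" by (simp add: power2_eq_square power4_eq_xxxx)
  from a b c show ?thesis by linarith
qed

lemma lin_aux:
  fixes X P R S Y a b :: real
  assumes "X \<le> P" "- R - S \<le> Y" "b \<le> a"
  shows "X - Y - 1/4 * (a - b) \<le> P + R + S"
proof -
  have "0 \<le> 1/4 * (a - b)" using assms(3) by simp
  then show ?thesis using assms(1,2) by linarith
qed

lemma core:
  fixes n :: nat and w A C c0 s0 Gv :: real
  assumes n1: "1 \<le> n"
    and Gpos: "0 < Gv" and AG: "A * Gv \<le> 1" and A1: "1 < A" and w1: "1 \<le> w" and wA: "w \<le> A"
    and s0G: "s0 / real n < Gv / 2"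
    and P: "\<And>\<alpha>. s0 / real n < \<alpha> \<Longrightarrow> \<alpha> < pi - pi/2 \<Longrightarrow>
        \<bar>ln (D n \<alpha>) - ((real n)^2 * ln (cos (\<alpha> / 2)) - 1/4 * ln (real n * sin (\<alpha> / 2)) + c0)\<bar>
          \<le> C / (real n * sin (\<alpha> / 2))"
    and E4: "16 * ln (real n) \<le> (real n * Gv)^2"
    and E5: "(real n * Gv)^4 / (real n)^2 * (A^4/24 + 1/2) / 256 \<le> 1/4"
    and E6: "16 * \<bar>C\<bar> / (real n * Gv) \<le> 1/2"
    and E7: "8 \<le> real n * Gv"
    and E8: "c0 + 1 < (real n * Gv)^2 / 32"
    and Dnn: "0 \<le> D n (Gv/2)" "0 \<le> D n (w * Gv/2)"
  shows "D n (w * Gv / 2) \<le> exp (1 - (w - 1) * ln (real n)) * D n (Gv / 2)"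
proof -
  define N where "N = real n"
  have N1: "1 \<le> N" using n1 unfolding N_def by simp
  have Npos: "0 < N" using N1 by simp
  define g where "g = N * Gv"
  have gpos: "0 < g" unfolding g_def using Npos Gpos by simp
  define tb where "tb = Gv / 2 / 2"
  define ta where "ta = w * Gv / 2 / 2"
  have ta_eq: "ta = w * tb" unfolding ta_def tb_def by simp
  have tbpos: "0 < tb" unfolding tb_def using Gpos by simp
  have GA: "Gv \<le> A * Gv" using A1 Gpos by simp
  have wG: "w * Gv \<le> A * Gv" using wA Gpos by (intro mult_right_mono) auto
  have Gv1: "Gv \<le> 1" using GA AG by linarith
  have wG1: "w * Gv \<le> 1" using wG AG by linarith
  have tab: "tb \<le> ta" unfolding ta_eq using w1 tbpos by (simp add: mult_le_cancel_right1)
  have ta1: "ta \<le> 1/4" unfolding ta_def using wG1 by simp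
  have tb1: "tb \<le> 1/4" unfolding tb_def using Gv1 by simp
  have tapos: "0 < ta" using tab tbpos by linarith
  have pi3: "3 < pi" by (rule pi_gt3)
  define fb where "fb = N^2 * ln (cos tb) - 1/4 * ln (N * sin tb) + c0"
  define fa where "fa = N^2 * ln (cos ta) - 1/4 * ln (N * sin ta) + c0"
  have wGh: "w * Gv / 2 \<le> 1/2" using wG1 by simp
  have Gh: "Gv / 2 \<le> w * Gv / 2" using w1 Gpos by (simp add: mult_le_cancel_right1)
  have hb: "\<bar>ln (D n (Gv/2)) - fb\<bar> \<le> C / (N * sin tb)"
    using P[of "Gv/2"] s0G wGh Gh pi3 unfolding fb_def tb_def N_def by simp
  have ha: "\<bar>ln (D n (w * Gv/2)) - fa\<bar> \<le> C / (N * sin ta)"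
    using P[of "w * Gv/2"] s0G wGh Gh pi3 unfolding fa_def ta_def N_def by simp
  have sb: "tb / 2 \<le> sin tb" using tbpos tb1 by (intro sin_half) auto
  have sab: "sin tb \<le> sin ta"
    using tab tbpos ta1 pi3 by (subst sin_mono_le_eq) auto
  have sbpos: "0 < sin tb" using sb tbpos by linarith
  have Nsb: "N * (tb / 2) \<le> N * sin tb" using sb Npos by simp
  have Nsab: "N * sin tb \<le> N * sin ta" using sab Npos by simp
  have Ntb: "N * (tb / 2) = g / 8" unfolding g_def tb_def by simp
  have g8: "8 \<le> g" using E7 unfolding g_def N_def .
  have Nsb1: "1 \<le> N * sin tb" using Nsb Ntb g8 by linarith
  define eb where "eb = 8 * \<bar>C\<bar> / g"
  have Eb0: "\<bar>C\<bar> / (N * sin tb) \<le> eb"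
  proof -
    have "\<bar>C\<bar> / (N * sin tb) \<le> \<bar>C\<bar> / (N * (tb / 2))"
      using Nsb Npos tbpos sbpos by (intro divide_left_mono) auto
    also have "\<dots> = eb" unfolding eb_def Ntb by simp
    finally show ?thesis .
  qed
  have Eb: "C / (N * sin tb) \<le> eb"
  proof -
    have "C / (N * sin tb) \<le> \<bar>C\<bar> / (N * sin tb)"
      using Npos sbpos by (intro divide_right_mono) auto
    then show ?thesis using Eb0 by linarith
  qed
  have Ea: "C / (N * sin ta) \<le> eb"
  proof -
    have "C / (N * sin ta) \<le> \<bar>C\<bar> / (N * sin ta)"
      using Npos sbpos sab by (intro divide_right_mono) auto
    also have "\<dots> \<le> \<bar>C\<bar> / (N * sin tb)"
      using Nsab Npos sbpos by (intro divide_left_mono) auto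
    finally show ?thesis using Eb0 by linarith
  qed
  have eb2: "2 * eb \<le> 1/2" using E6 unfolding eb_def g_def N_def by simp
  have la: "ln (cos ta) \<le> ta^4/24 - ta^2/2" using tapos ta1 by (intro lncos_upper) auto
  have lb1: "(- (tb^2/2)) - tb^4/2 \<le> ln (cos tb)" using tbpos tb1 by (intro lncos_lower) auto
  have lb2: "ln (cos tb) \<le> tb^4/24 - tb^2/2" using tbpos tb1 by (intro lncos_upper) auto
  have lsin1: "ln (N * sin tb) \<le> ln (N * sin ta)" using Nsab Nsb1 by (intro ln_mono) auto
  have lsin0: "0 \<le> ln (N * sin tb)" using Nsb1 by simp
  define Q where "Q = g^4 / N^2 / 256"
  have Qnn: "0 \<le> Q" unfolding Q_def by simp
  have E5': "Q * (A^4/24 + 1/2) \<le> 1/4" using E5 unfolding Q_def g_def N_def by simp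
  have Ntb2: "N^2 * tb^2 = g^2 / 16" unfolding g_def tb_def by (simp add: power_mult_distrib power_divide)
  have Ntb4: "N^2 * tb^4 = Q" unfolding Q_def g_def tb_def using Npos
    by (simp add: power_mult_distrib power_divide field_simps)
  have Nta2: "N^2 * ta^2 = w^2 * (g^2 / 16)" unfolding ta_eq using Ntb2 by (simp add: power_mult_distrib mult.left_commute)
  have Nta4: "N^2 * ta^4 = w^4 * Q" unfolding ta_eq using Ntb4 by (simp add: power_mult_distrib mult.left_commute)
  have w4: "w^4 \<le> A^4" using w1 wA by (intro power_mono) auto
  have wQ: "w^4 * Q / 24 + Q / 2 \<le> 1/4"
  proof -
    have "w^4 * Q \<le> A^4 * Q" using w4 Qnn by (rule mult_right_mono)
    then show ?thesis using E5' by (simp add: algebra_simps)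
  qed
  have wL: "(w - 1) * ln N \<le> (w^2 - 1) * (g^2 / 32)"
  proof -
    have wm: "0 \<le> w - 1" using w1 by simp
    have gw: "g^2 \<le> w * g^2" using mult_right_mono[OF w1, of "g^2"] by simp
    have "(w - 1) * ln N \<le> (w - 1) * (g^2 / 16)"
      using E4 wm unfolding g_def N_def by (intro mult_left_mono) auto
    also have "\<dots> \<le> (w - 1) * ((w + 1) * (g^2 / 32))"
      using wm w1 gw by (intro mult_left_mono) (auto simp: field_simps)
    also have "\<dots> = (w^2 - 1) * (g^2 / 32)" by (simp add: power2_eq_square algebra_simps)
    finally show ?thesis .
  qed
  have diff: "fa - fb \<le> 1/4 - (w - 1) * ln N"
  proof -
    have "N^2 * ln (cos ta) \<le> N^2 * (ta^4/24 - ta^2/2)" using la by (intro mult_left_mono) auto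
    also have "\<dots> = w^4 * Q / 24 - w^2 * (g^2/32)" using Nta2 Nta4 by (simp add: algebra_simps)
    finally have A1': "N^2 * ln (cos ta) \<le> w^4 * Q / 24 - w^2 * (g^2/32)" .
    have "N^2 * ((- (tb^2/2)) - tb^4/2) \<le> N^2 * ln (cos tb)" using lb1 by (intro mult_left_mono) auto
    moreover have "N^2 * ((- (tb^2/2)) - tb^4/2) = - (g^2/32) - Q/2" using Ntb2 Ntb4 by (simp add: algebra_simps)
    ultimately have B1': "- (g^2/32) - Q/2 \<le> N^2 * ln (cos tb)" by simp
    have "fa - fb = N^2 * ln (cos ta) - N^2 * ln (cos tb) - 1/4 * (ln (N * sin ta) - ln (N * sin tb))"
      unfolding fa_def fb_def by (simp add: algebra_simps)
    also have "\<dots> \<le> w^4 * Q / 24 - w^2 * (g^2/32) + (g^2/32) + Q/2"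
      by (rule lin_aux[OF A1' B1' lsin1])
    also have "\<dots> = (w^4 * Q / 24 + Q/2) - (w^2 - 1) * (g^2/32)"
    proof -
      have "(w^2 - 1) * (g^2/32) = w^2 * (g^2/32) - g^2/32" by (simp add: left_diff_distrib)
      then show ?thesis by linarith
    qed
    also have "\<dots> \<le> 1/4 - (w - 1) * ln N" using wQ wL by linarith
    finally show ?thesis .
  qed
  have fbneg: "fb < -3/4"
  proof -
    have "N^2 * ln (cos tb) \<le> N^2 * (tb^4/24 - tb^2/2)" using lb2 by (intro mult_left_mono) auto
    also have "\<dots> = Q / 24 - g^2/32" using Ntb2 Ntb4 by (simp add: algebra_simps)
    finally have "N^2 * ln (cos tb) \<le> Q / 24 - g^2/32" .
    moreover have "Q / 24 \<le> 1/4"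
    proof -
      have "Q * (1/24) \<le> Q * (A^4/24 + 1/2)" using Qnn by (intro mult_left_mono) auto
      then show ?thesis using E5' by simp
    qed
    moreover have "c0 + 1 < g^2/32" using E8 unfolding g_def N_def .
    ultimately show ?thesis unfolding fb_def using lsin0 by linarith
  qed
  have lnN: "0 \<le> ln N" using N1 by simp
  have wlnN: "0 \<le> (w - 1) * ln N" using w1 lnN by simp
  have lDb_up: "ln (D n (Gv/2)) \<le> fb + eb" using hb Eb by (simp add: abs_le_iff)
  have lDb_lo: "fb - eb \<le> ln (D n (Gv/2))" using hb Eb by (simp add: abs_le_iff)
  have lDa_up: "ln (D n (w * Gv/2)) \<le> fa + eb" using ha Ea by (simp add: abs_le_iff)
  have ebnn: "0 \<le> eb" unfolding eb_def using gpos by simp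
  have Dbpos: "0 < D n (Gv/2)"
  proof (rule ccontr)
    assume "\<not> 0 < D n (Gv/2)"
    then have "D n (Gv/2) = 0" using Dnn(1) by simp
    then show False using lDb_up fbneg eb2 ebnn by simp
  qed
  have Dapos: "0 < D n (w * Gv/2)"
  proof (rule ccontr)
    assume "\<not> 0 < D n (w * Gv/2)"
    then have "D n (w * Gv/2) = 0" using Dnn(2) by simp
    then show False using lDa_up diff fbneg eb2 ebnn wlnN by simp
  qed
  have key: "ln (D n (w * Gv/2)) \<le> (1 - (w - 1) * ln N) + ln (D n (Gv/2))"
    using lDa_up lDb_lo diff eb2 by linarith
  have "D n (w * Gv/2) = exp (ln (D n (w * Gv/2)))" using Dapos by simp
  also have "\<dots> \<le> exp ((1 - (w - 1) * ln N) + ln (D n (Gv/2)))" using key by simp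
  also have "\<dots> = exp (1 - (w - 1) * ln N) * D n (Gv/2)" using Dbpos by (simp add: exp_add)
  finally show ?thesis unfolding N_def by simp
qed


lemma div256: fixes T :: real assumes "T < 64" shows "T / 256 \<le> 1/4"
  using assms by simp

theorem lemma9:
  fixes s0 c0 x A :: real
  assumes s0_pos: "s0 > 0"
    and DIKZ: "\<forall>\<epsilon>>0. \<exists>C N0. \<forall>n::nat. n \<ge> N0 \<longrightarrow> (\<forall>\<alpha>. s0 / real n < \<alpha> \<and> \<alpha> < pi - \<epsilon> \<longrightarrow>
        \<bar>ln (D n \<alpha>) - ((real n)^2 * ln (cos (\<alpha> / 2)) - 1/4 * ln (real n * sin (\<alpha> / 2)) + c0)\<bar>
          \<le> C / (real n * sin (\<alpha> / 2)))"
    and A_gt: "A > 1"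
  shows "\<exists>N3>0. \<forall>n::nat. real n > N3 \<longrightarrow> (\<forall>w\<in>{1..A}.
            s0 / real n < G n x / 2 \<and> G n x / 2 < A * G n x / 2 \<and> A * G n x / 2 < pi / 2 \<and>
            D n (w * G n x / 2) \<le> exp (1 - (w - 1) * ln (real n)) * D n (G n x / 2))"
proof -
  have "pi / 2 > 0" by simp
  then obtain C N0 where CN: "\<forall>n::nat. n \<ge> N0 \<longrightarrow> (\<forall>\<alpha>. s0 / real n < \<alpha> \<and> \<alpha> < pi - pi / 2 \<longrightarrow>
        \<bar>ln (D n \<alpha>) - ((real n)^2 * ln (cos (\<alpha> / 2)) - 1/4 * ln (real n * sin (\<alpha> / 2)) + c0)\<bar>
          \<le> C / (real n * sin (\<alpha> / 2)))"
    using DIKZ by blast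
  have Apos: "0 < A" using A_gt by simp
  define K where "K = A^4/24 + 1/2"
  have Kpos: "0 < K" unfolding K_def by (simp add: add_nonneg_pos)
  have L1: "(\<lambda>n. G n x) \<longlonglongrightarrow> 0" unfolding G_def by real_asymp
  have L2: "filterlim (\<lambda>n. real n * G n x) at_top sequentially" unfolding G_def by real_asymp
  have L3: "(\<lambda>n. (real n * G n x)^4 / (real n)^2) \<longlonglongrightarrow> 0" unfolding G_def by real_asymp
  have L4a: "(\<lambda>n. (real n * G n x)^2 / ln (real n)) \<longlonglongrightarrow> 32"
    unfolding G_def by (real_asymp simp: powr_half_sqrt)
  have L4b: "eventually (\<lambda>n. 0 < ln (real n)) sequentially" by real_asymp
  have L4: "eventually (\<lambda>n. 16 * ln (real n) \<le> (real n * G n x)^2) sequentially"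
  proof -
    have L4c: "eventually (\<lambda>n. 16 < (real n * G n x)^2 / ln (real n)) sequentially"
      by (rule order_tendstoD(1)[OF L4a]) simp
    show ?thesis using L4c L4b by eventually_elim (auto simp: less_divide_eq)
  qed
  have L5: "eventually (\<lambda>n. 0 < G n x) sequentially" unfolding G_def by real_asymp
  have ev1: "eventually (\<lambda>n. G n x < 1 / A) sequentially"
    using order_tendstoD(2)[OF L1, of "1/A"] Apos by simp
  define Z where "Z = max (2 * s0) (max 8 (max (32 * \<bar>C\<bar>) (32 * (\<bar>c0\<bar> + 1))))"
  have ev2: "eventually (\<lambda>n. Z < real n * G n x) sequentially"
    using L2 by (simp add: filterlim_at_top_dense)
  have ev3: "eventually (\<lambda>n. (real n * G n x)^4 / (real n)^2 < 64 / K) sequentially"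
    using order_tendstoD(2)[OF L3, of "64/K"] Kpos by simp
  have ev4: "eventually (\<lambda>n. max N0 1 \<le> n) sequentially" by (rule eventually_ge_at_top)
  have "eventually (\<lambda>n. G n x < 1 / A \<and> Z < real n * G n x \<and> (real n * G n x)^4 / (real n)^2 < 64 / K
        \<and> max N0 1 \<le> n \<and> 16 * ln (real n) \<le> (real n * G n x)^2 \<and> 0 < G n x) sequentially"
    using ev1 ev2 ev3 ev4 L4 L5 by eventually_elim auto
  then obtain M where M: "\<And>n. n \<ge> M \<Longrightarrow> G n x < 1 / A \<and> Z < real n * G n x \<and> (real n * G n x)^4 / (real n)^2 < 64 / K
        \<and> max N0 1 \<le> n \<and> 16 * ln (real n) \<le> (real n * G n x)^2 \<and> 0 < G n x"
    unfolding eventually_sequentially by blast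
  show ?thesis
  proof (intro exI[of _ "real M + 1"] conjI allI impI ballI)
    show "0 < real M + 1" by simp
    fix n :: nat and w :: real
    assume nM: "real M + 1 < real n" and w: "w \<in> {1..A}"
    have "M \<le> n" using nM by simp
    note Mn = M[OF this]
    define Gv where "Gv = G n x"
    have n1: "1 \<le> n" and nN0: "N0 \<le> n" using Mn by auto
    have Npos: "0 < real n" using n1 by simp
    have Gpos: "0 < Gv" using Mn unfolding Gv_def by simp
    have AG: "A * Gv \<le> 1"
    proof -
      have "Gv < 1 / A" using Mn unfolding Gv_def by simp
      then have "A * Gv < A * (1 / A)" using Apos by (intro mult_strict_left_mono) auto
      then show ?thesis using Apos by simp
    qed
    define g where "g = real n * Gv"
    have gZ: "Z < g" using Mn unfolding g_def Gv_def by simp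
    have g8: "8 \<le> g" and gs0: "2 * s0 < g" and gC: "32 * \<bar>C\<bar> < g" and gc0: "32 * (\<bar>c0\<bar> + 1) < g"
      using gZ unfolding Z_def by auto
    have gpos: "0 < g" using g8 by simp
    have E7: "8 \<le> real n * Gv" using g8 unfolding g_def .
    have s0G: "s0 / real n < Gv / 2"
    proof -
      have "s0 < real n * Gv / 2" using gs0 unfolding g_def by simp
      then show ?thesis using Npos by (simp add: divide_less_eq mult.commute)
    qed
    have E6: "16 * \<bar>C\<bar> / (real n * Gv) \<le> 1/2"
      using gC gpos unfolding g_def by (simp add: divide_le_eq)
    have E8: "c0 + 1 < (real n * Gv)^2 / 32"
    proof -
      have "g \<le> g^2" using g8 by (simp add: power2_eq_square)
      then show ?thesis using gc0 unfolding g_def by simp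
    qed
    have E5: "(real n * Gv)^4 / (real n)^2 * (A^4/24 + 1/2) / 256 \<le> 1/4"
    proof -
      have "(real n * Gv)^4 / (real n)^2 < 64 / K" using Mn unfolding Gv_def by simp
      then have "(real n * Gv)^4 / (real n)^2 * K < 64" using Kpos by (simp add: less_divide_eq)
      then have "(real n * Gv)^4 / (real n)^2 * K / 256 \<le> 1/4" by (rule div256)
      then show ?thesis unfolding K_def .
    qed
    have E4: "16 * ln (real n) \<le> (real n * Gv)^2" using Mn unfolding Gv_def by simp
    have w1: "1 \<le> w" and wA: "w \<le> A" using w by auto
    have wG: "w * Gv \<le> A * Gv" using wA Gpos by (intro mult_right_mono) auto
    have pi3: "3 < pi" by (rule pi_gt3)
    have GA0: "Gv \<le> A * Gv" using A_gt Gpos by simp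
    have GA1: "Gv \<le> 1" using GA0 AG by linarith
    have wG1: "w * Gv \<le> 1" using wG AG by linarith
    have Dnn1: "0 \<le> D n (Gv/2)" by (rule D_nonneg) (use GA1 pi3 in simp)
    have Dnn2: "0 \<le> D n (w * Gv/2)" by (rule D_nonneg) (use wG1 pi3 in simp)
    note Dnn = Dnn1 Dnn2
    have P: "\<And>\<alpha>. s0 / real n < \<alpha> \<Longrightarrow> \<alpha> < pi - pi/2 \<Longrightarrow>
        \<bar>ln (D n \<alpha>) - ((real n)^2 * ln (cos (\<alpha> / 2)) - 1/4 * ln (real n * sin (\<alpha> / 2)) + c0)\<bar>
          \<le> C / (real n * sin (\<alpha> / 2))"
      using CN nN0 by blast
    have main: "D n (w * Gv / 2) \<le> exp (1 - (w - 1) * ln (real n)) * D n (Gv / 2)"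
      by (rule core[OF n1 Gpos AG A_gt w1 wA s0G P E4 E5 E6 E7 E8 Dnn])
    have GA: "Gv / 2 < A * Gv / 2" using A_gt Gpos by simp
    have AGpi: "A * Gv / 2 < pi / 2" using AG pi3 by simp
    show "s0 / real n < G n x / 2" using s0G unfolding Gv_def .
    show "G n x / 2 < A * G n x / 2" using GA unfolding Gv_def .
    show "A * G n x / 2 < pi / 2" using AGpi unfolding Gv_def .
    show "D n (w * G n x / 2) \<le> exp (1 - (w - 1) * ln (real n)) * D n (G n x / 2)"
      using main unfolding Gv_def .
  qed
qed

end
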